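(* There exist absolute constants $q_0$ and $C>0$ such that the following holds. Let $q\geq q_0$ be an integer, let $\Delta\in\mathbb{N}$ with $\Delta\leq\frac{\log q}{\log 2}$, and let $n\geq\Delta q$ be an integer. Let $B:=\frac{1}{n!}\sum_{\pi\in S_n}\binom{c_1(\pi^q)}{\Delta}$. Then: if $\Delta=1$, $B=\sigma_0(q)$; if $\Delta=2$, $\left|B-\frac12\sigma_1(q)\right|\leq C\,\sigma_0(q)^2$; if $\Delta=3$, $\left|B-\frac16\sigma_2(q)\right|\leq C\,\sigma_0(q)\sigma_1(q)$; if $\Delta\geq4$, $\left|B-\frac{1}{\Delta!}\sigma_{\Delta-1}(q)\right|\leq C\,\frac{1}{\Delta!}q^{\Delta-2}\left(\Delta\sigma_0(q)+2^{\Delta}\right)$.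
   Context: For $\pi\in S_n$, $c_1(\pi^q)$ is the number of fixed points of the permutation $\pi^q$. For real $\alpha$, $\sigma_\alpha(q)=\sum_{d\mid q}d^\alpha$. $\mathbb{N}$ denotes the positive integers. *)

theory Defs
  imports "HOL-Analysis.Analysis" "HOL-Combinatorics.Permutations"
begin

definition c1 :: "nat \<Rightarrow> (nat \<Rightarrow> nat) \<Rightarrow> nat" where
  "c1 n p = card {i \<in> {1..n}. p i = i}"

definition sigma :: "real \<Rightarrow> nat \<Rightarrow> real" where
  "sigma \<alpha> q = (\<Sum>d\<in>{d. d dvd q}. real d powr \<alpha>)"

definition Bavg :: "nat \<Rightarrow> nat \<Rightarrow> nat \<Rightarrow> real" where
  "Bavg n q \<Delta> = (\<Sum>\<pi>\<in>{p. p permutes {1..n}}. real (c1 n (\<pi> ^^ q) choose \<Delta>)) / fact n"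

end

theory Submission
  imports Defs "HOL-Combinatorics.Cycles" "HOL-Combinatorics.Orbits" "HOL-Analysis.Convex"
begin


lemma cyc_pow:
  assumes "distinct L" "i < length L"
  shows "(cycle_of_list L ^^ n) (L!i) = L!((n+i) mod length L)"
proof -
  have "map (cycle_of_list L ^^ n) L = rotate n L" using cyclic_rotation[OF assms(1)] .
  hence "(map (cycle_of_list L ^^ n) L) ! i = rotate n L ! i" by simp
  thus ?thesis using assms(2) by (simp add: nth_rotate)
qed

lemma cyc_fix_iff:
  assumes "distinct L" "y \<in> set L"
  shows "(cycle_of_list L ^^ n) y = y \<longleftrightarrow> length L dvd n"
proof -
  obtain i where i: "i < length L" "y = L!i" using assms(2) by (metis in_set_conv_nth)
  have "(cycle_of_list L ^^ n) y = L!((n+i) mod length L)" using cyc_pow[OF assms(1) i(1)] i(2) by simp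
  moreover have "L!((n+i) mod length L) = L!i \<longleftrightarrow> (n+i) mod length L = i"
  proof -
    have "length L > 0" using i(1) by linarith
    from nth_eq_iff_index_eq[OF assms(1) mod_less_divisor[OF this, of "n+i"] i(1)] show ?thesis .
  qed
  moreover have "(n+i) mod length L = i \<longleftrightarrow> length L dvd n"
  proof -
    have "(n+i) mod length L = i \<longleftrightarrow> (n+i) mod length L = i mod length L" using i(1) by simp
    also have "\<dots> \<longleftrightarrow> length L dvd n"
      using mod_eq_dvd_iff_nat[of i "n+i" "length L"] by (metis add_diff_cancel_right' le_add2)
    finally show ?thesis .
  qed
  ultimately show ?thesis using i(2) by simp
qed

lemma pow_on_L:
  assumes "\<forall>y\<in>set L. \<sigma> y = y" "y \<in> set L"
  shows "((cycle_of_list L \<circ> \<sigma>) ^^ n) y = (cycle_of_list L ^^ n) y"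
proof (induction n)
  case 0 then show ?case by simp
next
  case (Suc n)
  have "(cycle_of_list L ^^ n) y \<in> set L"
    using permutes_funpow[OF cycle_permutes, of n L] assms(2) by (simp add: permutes_in_image)
  then show ?case using Suc assms(1) by simp
qed

lemma pow_off_L:
  assumes "\<sigma> permutes B" "set L \<inter> B = {}" "y \<notin> set L"
  shows "((cycle_of_list L \<circ> \<sigma>) ^^ n) y = (\<sigma> ^^ n) y"
proof -
  have out: "\<sigma> z \<notin> set L" if "z \<notin> set L" for z
  proof (cases "z \<in> B")
    case True then have "\<sigma> z \<in> B" using assms(1) by (simp add: permutes_in_image)
    then show ?thesis using assms(2) by blast
  next
    case False then show ?thesis using assms(1) that by (simp add: permutes_not_in)
  qed
  have out2: "(\<sigma> ^^ n) y \<notin> set L" for n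
    by (induction n) (use assms(3) out in auto)
  show ?thesis
  proof (induction n)
    case 0 then show ?case by simp
  next
    case (Suc n)
    then show ?case using out[OF out2[of n]] by (simp add: id_outside_supp)
  qed
qed

definition Lx :: "'a set \<Rightarrow> 'a \<Rightarrow> 'a list set" where
  "Lx A x = {L. distinct L \<and> set L \<subseteq> A \<and> L \<noteq> [] \<and> hd L = x}"

definition Dom :: "'a set \<Rightarrow> 'a \<Rightarrow> ('a list \<times> ('a \<Rightarrow> 'a)) set" where
  "Dom A x = Sigma (Lx A x) (\<lambda>L. {\<sigma>. \<sigma> permutes (A - set L)})"

lemma fix_on_L:
  assumes "\<sigma> permutes (A - set L)" "y \<in> set L" shows "\<sigma> y = y"
  using assms by (simp add: permutes_not_in)

lemma compd_permutes:
  assumes "set L \<subseteq> A" "\<sigma> permutes (A - set L)"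
  shows "(cycle_of_list L \<circ> \<sigma>) permutes A"
proof -
  have "\<sigma> permutes A" using permutes_subset[OF assms(2)] by blast
  moreover have "cycle_of_list L permutes A" using permutes_subset[OF cycle_permutes assms(1)] .
  ultimately show ?thesis by (rule permutes_compose)
qed

lemma support_compd:
  assumes "L \<in> Lx A x" "\<sigma> permutes (A - set L)"
  shows "support (cycle_of_list L \<circ> \<sigma>) x = L"
proof -
  let ?p = "cycle_of_list L \<circ> \<sigma>"
  let ?n = "length L"
  have d: "distinct L" and ne: "L \<noteq> []" and hx: "hd L = x" using assms(1) by (auto simp: Lx_def)
  have x0: "x = L!0" using ne hx by (simp add: hd_conv_nth)
  have xL: "x \<in> set L" using ne hx by auto
  have fixL: "\<forall>y\<in>set L. \<sigma> y = y" using fix_on_L[OF assms(2)] by blast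
  have pw: "(?p ^^ n) x = L!(n mod ?n)" for n
    using pow_on_L[OF fixL xL, of n] cyc_pow[OF d, of 0 n] ne x0 by simp
  have fx: "(?p ^^ n) x = x \<longleftrightarrow> ?n dvd n" for n
    using pow_on_L[OF fixL xL, of n] cyc_fix_iff[OF d xL] by simp
  have lp: "least_power ?p x = ?n"
    unfolding least_power_def
  proof (rule Least_equality)
    show "(?p ^^ ?n) x = x \<and> ?n > 0" using fx ne by simp
  next
    fix m assume "(?p ^^ m) x = x \<and> m > 0"
    then show "?n \<le> m" using fx by (auto intro: dvd_imp_le)
  qed
  have "support ?p x = map (\<lambda>i. L!i) [0..<?n]"
    unfolding lp by (rule map_cong) (auto simp: pw)
  also have "\<dots> = L" by (rule map_nth)
  finally show ?thesis .
qed

lemma restrict_compd: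
  assumes "\<sigma> permutes (A - set L)"
  shows "perm_restrict (cycle_of_list L \<circ> \<sigma>) (A - set L) = \<sigma>"
proof
  fix y show "perm_restrict (cycle_of_list L \<circ> \<sigma>) (A - set L) y = \<sigma> y"
  proof (cases "y \<in> A - set L")
    case True
    then have "\<sigma> y \<in> A - set L" using permutes_in_image[OF assms, of y] by blast
    then show ?thesis using True by (simp add: perm_restrict_simps id_outside_supp)
  next
    case False then show ?thesis using assms by (simp add: perm_restrict_simps permutes_not_in)
  qed
qed

lemma decomp_perm:
  assumes "finite A" "x \<in> A" "p permutes A"
  defines "L \<equiv> support p x"
  shows "L \<in> Lx A x" "perm_restrict p (A - set L) permutes (A - set L)"
        "cycle_of_list L \<circ> perm_restrict p (A - set L) = p"
proof -
  have pp: "permutation p" using permutes_imp_permutation[OF assms(1,3)] .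
  have d: "distinct L" unfolding L_def by (rule cycle_of_permutation[OF pp])
  have lp: "least_power p x > 0" using least_power_of_permutation(2)[OF pp] .
  have hd: "L \<noteq> [] \<and> hd L = x" unfolding L_def using lp by (simp add: upt_conv_Cons)
  have sL: "set L = range (\<lambda>i. (p ^^ i) x)" unfolding L_def by (rule support_set[OF pp])
  have inA: "set L \<subseteq> A"
    unfolding sL using permutes_funpow[OF assms(3)] assms(2) by (auto simp: permutes_in_image)
  show "L \<in> Lx A x" using d hd inA by (simp add: Lx_def)
  have orb: "set L = orbit p x" unfolding sL orbit_altdef_permutation[OF pp] by auto
  have cyc: "cyclic_on p (set L)" unfolding orb by (rule cyclic_on_orbit[OF assms(3,1)])
  show "perm_restrict p (A - set L) permutes (A - set L)"
    by (rule perm_restrict_diff_cyclic[OF assms(3) cyc])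
  have img: "p ` set L = set L"
  proof (rule endo_inj_surj)
    show "finite (set L)" by simp
    show "p ` set L \<subseteq> set L"
    proof
      fix z assume "z \<in> p ` set L"
      then obtain i where "z = p ((p ^^ i) x)" unfolding sL by auto
      then have "z = (p ^^ Suc i) x" by simp
      then show "z \<in> set L" unfolding sL by blast
    qed
    show "inj_on p (set L)" using permutes_inj[OF assms(3)] by (simp add: inj_on_def inj_def)
  qed
  show "cycle_of_list L \<circ> perm_restrict p (A - set L) = p"
  proof
    fix y
    show "(cycle_of_list L \<circ> perm_restrict p (A - set L)) y = p y"
    proof (cases "y \<in> set L")
      case True
      then show ?thesis using cycle_restrict[OF pp, of y x] by (simp add: perm_restrict_simps L_def)
    next
      case False
      show ?thesis
      proof (cases "y \<in> A")
        case True
        have "p y \<notin> set L"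
        proof
          assume "p y \<in> set L"
          then obtain z where "z \<in> set L" "p y = p z" using img by (metis imageE)
          then show False using False permutes_inj[OF assms(3)] by (metis injD)
        qed
        then show ?thesis using True False by (simp add: perm_restrict_simps id_outside_supp)
      next
        case nA: False
        then have "y \<notin> set L" using inA by blast
        then show ?thesis using nA assms(3) by (simp add: perm_restrict_simps id_outside_supp permutes_not_in)
      qed
    qed
  qed
qed

lemma bij_Dom:
  assumes "finite A" "x \<in> A"
  shows "bij_betw (\<lambda>(L,\<sigma>). cycle_of_list L \<circ> \<sigma>) (Dom A x) {p. p permutes A}"
proof (rule bij_betw_byWitness[where f'="\<lambda>p. (support p x, perm_restrict p (A - set (support p x)))"])
  show "\<forall>a\<in>Dom A x. (\<lambda>p. (support p x, perm_restrict p (A - set (support p x)))) ((\<lambda>(L,\<sigma>). cycle_of_list L \<circ> \<sigma>) a) = a"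
  proof
    fix a assume "a \<in> Dom A x"
    then obtain L \<sigma> where a: "a = (L,\<sigma>)" "L \<in> Lx A x" "\<sigma> permutes (A - set L)" by (auto simp: Dom_def)
    show "(\<lambda>p. (support p x, perm_restrict p (A - set (support p x)))) ((\<lambda>(L,\<sigma>). cycle_of_list L \<circ> \<sigma>) a) = a"
      using support_compd[OF a(2,3)] restrict_compd[OF a(3)] a(1) by simp
  qed
  show "\<forall>a'\<in>{p. p permutes A}. (\<lambda>(L,\<sigma>). cycle_of_list L \<circ> \<sigma>) ((\<lambda>p. (support p x, perm_restrict p (A - set (support p x)))) a') = a'"
    using decomp_perm[OF assms] by auto
  show "(\<lambda>(L,\<sigma>). cycle_of_list L \<circ> \<sigma>) ` Dom A x \<subseteq> {p. p permutes A}"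
    by (auto simp: Dom_def Lx_def intro: compd_permutes)
  show "(\<lambda>p. (support p x, perm_restrict p (A - set (support p x)))) ` {p. p permutes A} \<subseteq> Dom A x"
    using decomp_perm[OF assms] by (auto simp: Dom_def)
qed


definition Fq :: "nat \<Rightarrow> 'a set \<Rightarrow> ('a \<Rightarrow> 'a) \<Rightarrow> 'a set" where
  "Fq q A p = {y\<in>A. (p ^^ q) y = y}"

definition Bs :: "nat \<Rightarrow> 'a set \<Rightarrow> nat \<Rightarrow> nat" where
  "Bs q A k = (\<Sum>p\<in>{p. p permutes A}. card (Fq q A p) choose k)"

lemma finite_Lx: "finite A \<Longrightarrow> finite (Lx A x)"
proof -
  assume fA: "finite A"
  have "Lx A x \<subseteq> {xs. set xs \<subseteq> A \<and> length xs \<le> card A}"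
    by (auto simp: Lx_def card_mono fA distinct_card[symmetric])
  moreover have "finite {xs. set xs \<subseteq> A \<and> length xs \<le> card A}"
    by (rule finite_lists_length_le[OF fA])
  ultimately show ?thesis by (rule finite_subset)
qed

lemma Fq_compd:
  assumes "L \<in> Lx A x" "\<sigma> permutes (A - set L)"
  shows "x \<in> Fq q A (cycle_of_list L \<circ> \<sigma>) \<longleftrightarrow> length L dvd q"
    and "length L dvd q \<Longrightarrow> Fq q A (cycle_of_list L \<circ> \<sigma>) = set L \<union> Fq q (A - set L) \<sigma>"
proof -
  have d: "distinct L" and ne: "L \<noteq> []" and hx: "hd L = x" and LA: "set L \<subseteq> A"
    using assms(1) by (auto simp: Lx_def)
  have xL: "x \<in> set L" using ne hx by auto
  have fixL: "\<forall>y\<in>set L. \<sigma> y = y" using fix_on_L[OF assms(2)] by blast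
  show "x \<in> Fq q A (cycle_of_list L \<circ> \<sigma>) \<longleftrightarrow> length L dvd q"
    using pow_on_L[OF fixL xL, of q] cyc_fix_iff[OF d xL] xL LA by (auto simp: Fq_def)
  assume dq: "length L dvd q"
  show "Fq q A (cycle_of_list L \<circ> \<sigma>) = set L \<union> Fq q (A - set L) \<sigma>"
  proof (rule set_eqI)
    fix y
    show "y \<in> Fq q A (cycle_of_list L \<circ> \<sigma>) \<longleftrightarrow> y \<in> set L \<union> Fq q (A - set L) \<sigma>"
    proof (cases "y \<in> set L")
      case True
      then show ?thesis using pow_on_L[OF fixL True, of q] cyc_fix_iff[OF d True] dq LA
        by (auto simp: Fq_def)
    next
      case False
      have "((cycle_of_list L \<circ> \<sigma>) ^^ q) y = (\<sigma> ^^ q) y"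
        by (rule pow_off_L[OF assms(2) _ False]) blast
      then show ?thesis using False by (auto simp: Fq_def)
    qed
  qed
qed

lemma finite_Fq: "finite A \<Longrightarrow> finite (Fq q A p)"
  by (simp add: Fq_def)

lemma rec_count:
  assumes fA: "finite A"
  shows "Suc k * Bs q A (Suc k) =
    (\<Sum>x\<in>A. \<Sum>L\<in>{L\<in>Lx A x. length L dvd q}. \<Sum>j\<le>k. (length L - 1 choose j) * Bs q (A - set L) (k - j))"
proof -
  let ?P = "{p. p permutes A}"
  define h where "h x p = (if x \<in> Fq q A p then (card (Fq q A p) - 1 choose k) else 0)" for x p
  have fP: "finite ?P" using finite_permutations[OF fA] .
  have "Suc k * Bs q A (Suc k) = (\<Sum>p\<in>?P. card (Fq q A p) * (card (Fq q A p) - 1 choose k))"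
    unfolding Bs_def sum_distrib_left
    by (rule sum.cong[OF refl]) (metis diff_Suc_1 times_binomial_minus1_eq zero_less_Suc)
  also have "\<dots> = (\<Sum>p\<in>?P. \<Sum>x\<in>A. h x p)"
  proof (rule sum.cong[OF refl])
    fix p
    have sub: "Fq q A p \<subseteq> A" by (auto simp: Fq_def)
    have "(\<Sum>x\<in>A. h x p) = (\<Sum>x\<in>A \<inter> Fq q A p. card (Fq q A p) - 1 choose k)"
      unfolding h_def by (rule sum.inter_restrict[symmetric, OF fA])
    also have "A \<inter> Fq q A p = Fq q A p" using sub by blast
    finally show "card (Fq q A p) * (card (Fq q A p) - 1 choose k) = (\<Sum>x\<in>A. h x p)" by simp
  qed
  also have "\<dots> = (\<Sum>x\<in>A. \<Sum>p\<in>?P. h x p)" by (rule sum.swap)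
  also have "\<dots> = (\<Sum>x\<in>A. \<Sum>L\<in>{L\<in>Lx A x. length L dvd q}. \<Sum>j\<le>k. (length L - 1 choose j) * Bs q (A - set L) (k - j))"
  proof (rule sum.cong[OF refl])
    fix x assume xA: "x \<in> A"
    have "(\<Sum>p\<in>?P. h x p) = (\<Sum>(L,\<sigma>)\<in>Dom A x. h x (cycle_of_list L \<circ> \<sigma>))"
      using sum.reindex_bij_betw[OF bij_Dom[OF fA xA], of "h x"] by (simp add: case_prod_unfold)
    also have "\<dots> = (\<Sum>L\<in>Lx A x. \<Sum>\<sigma>\<in>{\<sigma>. \<sigma> permutes (A - set L)}. h x (cycle_of_list L \<circ> \<sigma>))"
      unfolding Dom_def
      by (rule sum.Sigma[symmetric]) (auto simp: finite_Lx[OF fA] intro: finite_permutations fA)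
    also have "\<dots> = (\<Sum>L\<in>Lx A x. if length L dvd q then (\<Sum>j\<le>k. (length L - 1 choose j) * Bs q (A - set L) (k - j)) else 0)"
    proof (rule sum.cong[OF refl])
      fix L assume L: "L \<in> Lx A x"
      have d: "distinct L" and ne: "L \<noteq> []" and LA: "set L \<subseteq> A" using L by (auto simp: Lx_def)
      show "(\<Sum>\<sigma>\<in>{\<sigma>. \<sigma> permutes (A - set L)}. h x (cycle_of_list L \<circ> \<sigma>)) =
        (if length L dvd q then (\<Sum>j\<le>k. (length L - 1 choose j) * Bs q (A - set L) (k - j)) else 0)"
      proof (cases "length L dvd q")
        case False
        then show ?thesis using Fq_compd(1)[OF L] by (simp add: h_def)
      next
        case True
        have "(\<Sum>\<sigma>\<in>{\<sigma>. \<sigma> permutes (A - set L)}. h x (cycle_of_list L \<circ> \<sigma>)) =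
              (\<Sum>\<sigma>\<in>{\<sigma>. \<sigma> permutes (A - set L)}. \<Sum>j\<le>k. (length L - 1 choose j) * (card (Fq q (A - set L) \<sigma>) choose (k - j)))"
        proof (rule sum.cong[OF refl])
          fix \<sigma> assume "\<sigma> \<in> {\<sigma>. \<sigma> permutes (A - set L)}"
          then have s: "\<sigma> permutes (A - set L)" by simp
          have disj: "set L \<inter> Fq q (A - set L) \<sigma> = {}" by (auto simp: Fq_def)
          have "card (Fq q A (cycle_of_list L \<circ> \<sigma>)) = length L + card (Fq q (A - set L) \<sigma>)"
          proof -
            have "finite (Fq q (A - set L) \<sigma>)" using finite_Fq fA by blast
            then show ?thesis
              using Fq_compd(2)[OF L s True] card_Un_disjoint[OF _ _ disj] d
              by (simp add: distinct_card)
          qed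
          moreover have "length L \<ge> 1" using ne by (cases L) auto
          ultimately have "card (Fq q A (cycle_of_list L \<circ> \<sigma>)) - 1 = (length L - 1) + card (Fq q (A - set L) \<sigma>)"
            by simp
          then show "h x (cycle_of_list L \<circ> \<sigma>) = (\<Sum>j\<le>k. (length L - 1 choose j) * (card (Fq q (A - set L) \<sigma>) choose (k - j)))"
            using Fq_compd(1)[OF L s] True by (simp add: h_def vandermonde)
        qed
        also have "\<dots> = (\<Sum>j\<le>k. \<Sum>\<sigma>\<in>{\<sigma>. \<sigma> permutes (A - set L)}. (length L - 1 choose j) * (card (Fq q (A - set L) \<sigma>) choose (k - j)))"
          by (rule sum.swap)
        also have "\<dots> = (\<Sum>j\<le>k. (length L - 1 choose j) * Bs q (A - set L) (k - j))"
          by (simp add: Bs_def sum_distrib_left)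
        finally show ?thesis using True by simp
      qed
    qed
    also have "\<dots> = (\<Sum>L\<in>{L\<in>Lx A x. length L dvd q}. \<Sum>j\<le>k. (length L - 1 choose j) * Bs q (A - set L) (k - j))"
      by (rule sum.inter_filter[symmetric, OF finite_Lx[OF fA]])
    finally show "(\<Sum>p\<in>?P. h x p) = \<dots>" .
  qed
  finally show ?thesis .
qed


fun cq :: "nat \<Rightarrow> nat \<Rightarrow> real" where
  "cq q 0 = 1"
| "cq q (Suc k) = (\<Sum>d\<in>{d. d dvd q}. \<Sum>j\<le>k. real ((d - 1) choose j) * cq q (k - j)) / real (Suc k)"

lemma card_Lx_len:
  assumes fA: "finite A" and xA: "x \<in> A" and d1: "1 \<le> d" and dm: "d \<le> card A"
  shows "card {L\<in>Lx A x. length L = d} * fact (card A - d) = fact (card A - 1)"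
proof -
  have eq: "{L\<in>Lx A x. length L = d} = (\<lambda>L'. x # L') ` {L'. length L' = d - 1 \<and> distinct L' \<and> set L' \<subseteq> A - {x}}"
  proof (rule set_eqI)
    fix L show "L \<in> {L\<in>Lx A x. length L = d} \<longleftrightarrow> L \<in> (\<lambda>L'. x # L') ` {L'. length L' = d - 1 \<and> distinct L' \<and> set L' \<subseteq> A - {x}}"
    proof
      assume "L \<in> {L\<in>Lx A x. length L = d}"
      then show "L \<in> (\<lambda>L'. x # L') ` {L'. length L' = d - 1 \<and> distinct L' \<and> set L' \<subseteq> A - {x}}"
        by (cases L) (auto simp: Lx_def)
    next
      assume "L \<in> (\<lambda>L'. x # L') ` {L'. length L' = d - 1 \<and> distinct L' \<and> set L' \<subseteq> A - {x}}"
      then show "L \<in> {L\<in>Lx A x. length L = d}" using xA d1 by (auto simp: Lx_def)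
    qed
  qed
  have cA: "card (A - {x}) = card A - 1" using fA xA by simp
  have "card {L\<in>Lx A x. length L = d} = card {L'. length L' = d - 1 \<and> distinct L' \<and> set L' \<subseteq> A - {x}}"
    unfolding eq by (rule card_image) (auto simp: inj_on_def)
  also have "\<dots> = \<Prod>{card (A - {x}) - (d - 1) + 1 .. card (A - {x})}"
    by (rule card_lists_distinct_length_eq) (use fA cA dm d1 in auto)
  also have "\<dots> = \<Prod>{Suc (card A - d) .. card A - 1}" using cA d1 dm by (simp add: Suc_diff_le)
  finally have "card {L\<in>Lx A x. length L = d} = \<Prod>{Suc (card A - d) .. card A - 1}" .
  moreover have "fact (card A - 1) = (fact (card A - d) :: nat) * \<Prod>{Suc (card A - d) .. card A - 1}"
    by (rule fact_eq_fact_times) (use d1 in auto)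
  ultimately show ?thesis by simp
qed

lemma Bs_closed:
  assumes q1: "q \<ge> 1"
  shows "finite A \<Longrightarrow> k * q \<le> card A \<Longrightarrow> real (Bs q A k) = fact (card A) * cq q k"
proof (induction k arbitrary: A rule: less_induct)
  case (less k)
  note fA = less.prems(1)
  show ?case
  proof (cases k)
    case 0
    have "Bs q A 0 = card {p. p permutes A}" by (simp add: Bs_def)
    also have "\<dots> = fact (card A)" by (rule card_permutations[OF refl fA])
    finally show ?thesis using 0 by simp
  next
    case (Suc k')
    let ?m = "card A"
    let ?D = "{d. d dvd q}"
    have fD: "finite ?D" using q1 by simp
    have mq: "Suc k' * q \<le> ?m" using less.prems(2) Suc by simp
    have qm: "q \<le> ?m" using mq by (metis le_add1 le_trans mult_Suc)
    have m1: "?m \<ge> 1" using q1 qm by simp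
    define E where "E d = (\<Sum>j\<le>k'. real ((d - 1) choose j) * cq q (k' - j))" for d
    have per_x: "real (\<Sum>L\<in>{L\<in>Lx A x. length L dvd q}. \<Sum>j\<le>k'. (length L - 1 choose j) * Bs q (A - set L) (k' - j))
        = fact (?m - 1) * (\<Sum>d\<in>?D. E d)" if xA: "x \<in> A" for x
    proof -
      let ?S = "{L\<in>Lx A x. length L dvd q}"
      have fS: "finite ?S" using finite_Lx[OF fA] by simp
      have "real (\<Sum>L\<in>?S. \<Sum>j\<le>k'. (length L - 1 choose j) * Bs q (A - set L) (k' - j))
          = (\<Sum>L\<in>?S. fact (?m - length L) * E (length L))"
        unfolding of_nat_sum
      proof (rule sum.cong[OF refl])
        fix L assume L: "L \<in> ?S"
        have d: "distinct L" and LA: "set L \<subseteq> A" and dq: "length L dvd q" using L by (auto simp: Lx_def)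
        have lq: "length L \<le> q" using dq q1 by (simp add: dvd_imp_le)
        have cD: "card (A - set L) = ?m - length L"
          using LA fA d by (simp add: card_Diff_subset distinct_card)
        have "real ((length L - 1 choose j) * Bs q (A - set L) (k' - j)) =
              real (length L - 1 choose j) * (fact (?m - length L) * cq q (k' - j))" if tj: "j \<in> {..k'}" for j
        proof -
          have "(k' - j) * q \<le> k' * q" by simp
          also have "k' * q \<le> ?m - length L" using mq lq by simp
          finally have "real (Bs q (A - set L) (k' - j)) = fact (card (A - set L)) * cq q (k' - j)"
            using less.IH[of "k' - j" "A - set L"] Suc fA cD by simp
          then show ?thesis using cD by simp
        qed
        then have "(\<Sum>j\<le>k'. real ((length L - 1 choose j) * Bs q (A - set L) (k' - j))) =
           (\<Sum>j\<le>k'. real (length L - 1 choose j) * (fact (?m - length L) * cq q (k' - j)))"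
          by (rule sum.cong[OF refl])
        also have "\<dots> = fact (?m - length L) * E (length L)"
          unfolding E_def sum_distrib_left by (rule sum.cong[OF refl]) (simp add: mult_ac)
        finally show "(\<Sum>j\<le>k'. real ((length L - 1 choose j) * Bs q (A - set L) (k' - j))) = fact (?m - length L) * E (length L)" .
      qed
      also have "\<dots> = (\<Sum>d\<in>?D. \<Sum>L\<in>{L\<in>?S. length L = d}. fact (?m - length L) * E (length L))"
        by (rule sum.group[symmetric, OF fS fD]) auto
      also have "\<dots> = (\<Sum>d\<in>?D. fact (?m - 1) * E d)"
      proof (rule sum.cong[OF refl])
        fix d assume "d \<in> ?D"
        then have dq: "d dvd q" by simp
        have d1: "1 \<le> d" using dq q1 by (metis dvd_0_left_iff not_less_eq_eq le0 less_one not_less order.trans)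
        have dm: "d \<le> ?m" using dq q1 qm by (meson dvd_imp_le le_trans less_le_trans zero_less_one)
        have set_eq: "{L\<in>?S. length L = d} = {L\<in>Lx A x. length L = d}" using dq by auto
        have "(\<Sum>L\<in>{L\<in>?S. length L = d}. fact (?m - length L) * E (length L))
            = real (card {L\<in>Lx A x. length L = d}) * (fact (?m - d) * E d)"
          unfolding set_eq by simp
        also have "\<dots> = real (card {L\<in>Lx A x. length L = d} * fact (?m - d)) * E d" by simp
        also have "\<dots> = fact (?m - 1) * E d" unfolding card_Lx_len[OF fA xA d1 dm] by simp
        finally show "(\<Sum>L\<in>{L\<in>?S. length L = d}. fact (?m - length L) * E (length L)) = fact (?m - 1) * E d" .
      qed
      finally show ?thesis by (simp add: sum_distrib_left)
    qed
    have "real (Suc k') * real (Bs q A (Suc k')) = real (Suc k' * Bs q A (Suc k'))" by (simp only: of_nat_mult)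
    also have "\<dots> = (\<Sum>x\<in>A. fact (?m - 1) * (\<Sum>d\<in>?D. E d))"
      unfolding rec_count[OF fA] of_nat_sum by (rule sum.cong[OF refl]) (use per_x in auto)
    also have "\<dots> = real ?m * fact (?m - 1) * (\<Sum>d\<in>?D. E d)" by simp
    also have "\<dots> = fact ?m * (\<Sum>d\<in>?D. E d)" using m1 by (metis fact_nonzero fact_num_eq_if of_nat_eq_0_iff not_one_le_zero)
    also have "\<dots> = real (Suc k') * (fact ?m * cq q (Suc k'))" by (simp add: E_def)
    finally have "real (Suc k') * real (Bs q A (Suc k')) = real (Suc k') * (fact ?m * cq q (Suc k'))" .
    then show ?thesis using Suc by (metis mult_cancel_left of_nat_eq_0_iff nat.distinct(1))
  qed
qed


lemma cube_le_pow2: "(m::nat) \<ge> 4 \<Longrightarrow> m^3 \<le> 4 * 2^m"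
proof (induction m rule: dec_induct)
  case base then show ?case by simp
next
  case (step n)
  have "Suc n ^ 3 = n^3 + 3*n^2 + 3*n + 1" by (simp add: power3_eq_cube power2_eq_square algebra_simps)
  also have "\<dots> \<le> 2 * n^3"
  proof -
    have "n^3 = n * n^2" by (simp add: power3_eq_cube power2_eq_square)
    hence "n^3 \<ge> 4 * n^2" using step(1) by (simp add: mult_right_mono)
    moreover have "n^2 \<ge> 4 * n" using step(1) by (simp add: power2_eq_square)
    ultimately show ?thesis using step(1) by linarith
  qed
  also have "\<dots> \<le> 4 * 2^Suc n" using step(3) by simp
  finally show ?case .
qed

lemma sq_le_pow2: "(m::nat) \<ge> 4 \<Longrightarrow> m^2 \<le> 2^m"
proof (induction m rule: dec_induct)
  case base then show ?case by simp
next
  case (step n)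
  have "Suc n ^ 2 = n^2 + 2*n + 1" by (simp add: power2_eq_square algebra_simps)
  also have "\<dots> \<le> 2 * n^2"
  proof -
    have "n^2 \<ge> 4 * n" using step(1) by (simp add: power2_eq_square)
    then show ?thesis using step(1) by linarith
  qed
  also have "\<dots> \<le> 2^Suc n" using step(3) by simp
  finally show ?case .
qed

lemma sq256_le_pow2: "(m::nat) \<ge> 16 \<Longrightarrow> 256 * m^2 \<le> 2^m"
proof (induction m rule: dec_induct)
  case base then show ?case by simp
next
  case (step n)
  have "Suc n ^ 2 = n^2 + 2*n + 1" by (simp add: power2_eq_square algebra_simps)
  also have "\<dots> \<le> 2 * n^2"
  proof -
    have "n^2 \<ge> 4 * n" using step(1) by (simp add: power2_eq_square)
    then show ?thesis using step(1) by linarith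
  qed
  finally have "256 * Suc n ^ 2 \<le> 2 * (256 * n^2)" by simp
  also have "\<dots> \<le> 2^Suc n" using step(3) by simp
  finally show ?case .
qed

lemma split_sum3:
  fixes f :: "nat \<Rightarrow> real"
  shows "(\<Sum>j<n+3. f j) = f 0 + (\<Sum>j\<in>{1..n}. f j) + f (n+1) + f (n+2)"
proof -
  have "{..<Suc n} = insert 0 {1..n}" by auto
  then have "(\<Sum>j<Suc n. f j) = f 0 + (\<Sum>j\<in>{1..n}. f j)" by simp
  moreover have "(\<Sum>j<n+3. f j) = (\<Sum>j<Suc n. f j) + f (n+1) + f (n+2)"
    by (simp add: numeral_3_eq_3)
  ultimately show ?thesis by simp
qed

locale zrec =
  fixes s z :: "nat \<Rightarrow> real" and N Q :: real and \<Delta> :: nat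
  assumes N1: "N \<ge> 1" and s0: "s 0 = N" and NQ: "N^2 \<le> 4*Q"
   and s1a: "0 \<le> s 1" and s1b: "s 1 \<le> N" and s1c: "(s 1)^2 \<le> 2*N"
   and s2: "\<And>j. j \<ge> 2 \<Longrightarrow> 0 \<le> s j \<and> s j \<le> 2"
   and rec: "\<And>k. z (Suc k) = s k + (\<Sum>j<k. real (k choose j) * s j * z (k - j)) / Q"
   and Qpos: "Q > 0"
   and small: "\<And>k. k \<le> \<Delta> \<Longrightarrow> real k * N \<le> Q/8"
   and D2: "2^\<Delta> \<le> Q" and D4: "\<Delta> \<ge> 4"
begin

lemma z1: "z 1 = N" using rec[of 0] s0 by simp

lemma z2: "z 2 = s 1 + N*N/Q"
  using rec[of 1] s0 z1 by (simp add: numeral_2_eq_2)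

lemma NN: "N*N/Q \<le> 4" using NQ Qpos by (simp add: power2_eq_square divide_le_eq)

lemma z2nn: "z 2 \<ge> 0" using z2 s1a N1 Qpos by simp

lemma z3: "z 3 \<le> 15"
proof -
  have "z 3 = s 2 + (N * z 2 + 2 * s 1 * N) / Q"
    using rec[of 2] s0 z1 by (simp add: numeral_3_eq_3 numeral_2_eq_2 lessThan_Suc)
  moreover have "s 2 \<le> 2" using s2[of 2] by simp
  moreover have "N * z 2 + 2 * s 1 * N \<le> 12.5 * Q"
  proof -
    have Nsm: "N \<le> Q/8" using small[of 1] D4 by simp
    have "N * s 1 \<le> N * N" using s1b N1 by (simp add: mult_left_mono)
    also have "\<dots> \<le> 4 * Q" using NQ by (simp add: power2_eq_square)
    finally have a: "N * s 1 \<le> 4 * Q" .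
    have "N * (N*N/Q) \<le> N * 4" by (rule mult_left_mono[OF NN]) (use N1 in simp)
    also have "\<dots> \<le> Q/2" using Nsm by simp
    finally have b: "N * (N*N/Q) \<le> Q/2" .
    show ?thesis unfolding z2 using a b by (simp add: algebra_simps)
  qed
  ultimately show ?thesis
  proof -
    assume e: "z 3 = s 2 + (N * z 2 + 2 * s 1 * N) / Q" and s2': "s 2 \<le> 2" and h: "N * z 2 + 2 * s 1 * N \<le> 12.5 * Q"
    have "(N * z 2 + 2 * s 1 * N) / Q \<le> 12.5" by (subst pos_divide_le_eq[OF Qpos]) (use h in linarith)
    then show ?thesis using e s2' by linarith
  qed
qed

lemma mid_bound:
  "(\<Sum>j\<in>{1..n}. real (m choose j) * s j) \<le> real m * N + 2 * 2^m"
proof -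
  have "(\<Sum>j\<in>{1..n}. real (m choose j) * s j) \<le>
        (\<Sum>j\<in>{1..n}. real (m choose j) * (if j = 1 then N else 0) + 2 * real (m choose j))"
  proof (rule sum_mono)
    fix j assume "j \<in> {1..n}"
    then have "s j \<le> (if j = 1 then N else 0) + 2" using s1b s2[of j] by auto
    then show "real (m choose j) * s j \<le> real (m choose j) * (if j = 1 then N else 0) + 2 * real (m choose j)"
      by (metis distrib_left mult.commute mult_left_mono of_nat_0_le_iff)
  qed
  also have "\<dots> = (\<Sum>j\<in>{1..n}. real (m choose j) * (if j = 1 then N else 0)) + 2 * (\<Sum>j\<in>{1..n}. real (m choose j))"
    by (simp add: sum.distrib sum_distrib_left)
  also have "(\<Sum>j\<in>{1..n}. real (m choose j) * (if j = 1 then N else 0)) \<le> real m * N"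
  proof -
    have "(\<Sum>j\<in>{1..n}. real (m choose j) * (if j = 1 then N else 0)) = (\<Sum>j\<in>{1..n}. if j = 1 then real (m choose j) * N else 0)"
      by (rule sum.cong) auto
    also have "\<dots> = (if 1 \<in> {1..n} then real (m choose 1) * N else 0)" by (rule sum.delta) simp
    finally have "(\<Sum>j\<in>{1..n}. real (m choose j) * (if j = 1 then N else 0)) = (if 1 \<in> {1..n} then real m * N else 0)" by simp
    then show ?thesis using N1 by simp
  qed
  also have "(\<Sum>j\<in>{1..n}. real (m choose j)) \<le> 2^m"
  proof -
    have "(\<Sum>j\<in>{1..n}. real (m choose j)) \<le> (\<Sum>j\<in>{1..n} \<union> {..m}. real (m choose j))"
      by (rule sum_mono2) auto
    also have "{1..n} \<union> {..m} = {..m} \<union> {j. m < j \<and> j \<le> n}" by auto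
    also have "(\<Sum>j\<in>{..m} \<union> {j. m < j \<and> j \<le> n}. real (m choose j)) = (\<Sum>j\<le>m. real (m choose j))"
      by (rule sum.mono_neutral_right) auto
    also have "\<dots> = 2^m" using choose_row_sum[of m] by (metis of_nat_numeral of_nat_power of_nat_sum)
    finally show ?thesis .
  qed
  finally show ?thesis by simp
qed

lemma Tbound:
  assumes hz: "\<And>j. 3 \<le> j \<Longrightarrow> j \<le> n+3 \<Longrightarrow> z j \<le> 40"
  shows "(\<Sum>j<n+3. real ((n+3) choose j) * s j * z (n+3 - j)) \<le> 60 * (real (n+4) * N + 2^(n+4))"
proof -
  let ?m = "n+3"
  define f where "f j = real (?m choose j) * s j * z (?m - j)" for j
  have A: "f 0 \<le> 40 * N" unfolding f_def using hz[of ?m] s0 N1 by (simp add: mult_left_mono)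
  have B: "f (n+2) \<le> 2 * real ?m * N"
  proof -
    have "f (n+2) = real ?m * s (n+2) * N" unfolding f_def using z1
      by (simp add: numeral_3_eq_3 binomial_Suc_n)
    also have "\<dots> \<le> real ?m * 2 * N"
    proof -
      have "real ?m * s (n+2) \<le> real ?m * 2" by (rule mult_left_mono) (use s2[of "n+2"] in auto)
      then show ?thesis by (rule mult_right_mono) (use N1 in simp)
    qed
    finally show ?thesis by (simp add: algebra_simps)
  qed
  have C: "f (n+1) \<le> 18 * N + real ?m * N + 6 * 2^?m"
  proof (cases n)
    case 0
    have "f (n+1) = 3 * s 1 * z 2" unfolding f_def using 0 by (simp add: numeral_3_eq_3 numeral_2_eq_2)
    also have "\<dots> = 3 * (s 1)^2 + 3 * s 1 * (N*N/Q)" unfolding z2 by (simp add: algebra_simps power2_eq_square)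
    also have "\<dots> \<le> 3 * (2*N) + 3 * N * 4"
      using s1c s1b s1a NN Qpos by (intro add_mono mult_mono) auto
    finally have "f (n+1) \<le> 18 * N" by simp
    moreover have "0 \<le> real ?m * N" using N1 by simp
    moreover have "(0::real) \<le> 6 * 2^?m" by simp
    ultimately show ?thesis by linarith
  next
    case (Suc n')
    have mc: "real (?m choose (n+1)) = real ?m * (real ?m - 1) / 2"
    proof -
      have "?m choose (n+1) = ?m choose 2" by (subst binomial_symmetric) (auto simp: numeral_3_eq_3)
      then show ?thesis by (simp add: choose_two real_of_nat_div of_nat_diff) (simp add: numeral_3_eq_3 algebra_simps)
    qed
    have m4: "?m \<ge> 4" using Suc by simp
    have "f (n+1) = real (?m choose (n+1)) * s (n+1) * z 2" unfolding f_def by (simp add: numeral_3_eq_3 numeral_2_eq_2)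
    also have "\<dots> \<le> real (?m choose (n+1)) * 2 * (s 1 + 4)"
      using s2[of "n+1"] Suc z2nn NN unfolding z2 by (intro mult_mono) auto
    also have "\<dots> \<le> real ?m ^ 2 * s 1 + 4 * real ?m ^ 2"
      unfolding mc using s1a by (simp add: power2_eq_square algebra_simps mult_right_mono)
    finally have f1: "f (n+1) \<le> real ?m ^ 2 * s 1 + 4 * real ?m ^ 2" .
    have a: "real ?m ^ 2 * s 1 \<le> real ?m ^ 3 / 2 + real ?m * N"
    proof -
      have "0 \<le> real ?m * (real ?m - s 1)^2" by simp
      hence "real ?m ^ 2 * s 1 \<le> (real ?m ^ 3 + real ?m * (s 1)^2) / 2"
        by (simp add: power2_eq_square power3_eq_cube algebra_simps)
      also have "\<dots> \<le> (real ?m ^ 3 + real ?m * (2*N)) / 2"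
        using s1c by (simp add: mult_left_mono)
      finally show ?thesis by (simp add: algebra_simps)
    qed
    have b: "real ?m ^ 3 \<le> 4 * 2^?m"
    proof -
      have "real (?m ^ 3) \<le> real (4 * 2^?m)" using cube_le_pow2[OF m4] by (simp only: of_nat_le_iff)
      then show ?thesis by simp
    qed
    have c: "real ?m ^ 2 \<le> 2^?m"
    proof -
      have "real (?m ^ 2) \<le> real (2^?m)" using sq_le_pow2[OF m4] by (simp only: of_nat_le_iff)
      then show ?thesis by simp
    qed
    show ?thesis using f1 a b c N1 by linarith
  qed
  have M: "(\<Sum>j\<in>{1..n}. f j) \<le> 40 * (real ?m * N + 2 * 2^?m)"
  proof -
    have "(\<Sum>j\<in>{1..n}. f j) \<le> (\<Sum>j\<in>{1..n}. real (?m choose j) * s j * 40)"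
    proof (rule sum_mono)
      fix j assume j: "j \<in> {1..n}"
      have "0 \<le> s j" using s1a s2[of j] j by (cases "j = 1") auto
      moreover have "z (?m - j) \<le> 40" using hz[of "?m - j"] j by auto
      ultimately show "f j \<le> real (?m choose j) * s j * 40" unfolding f_def
        by (simp add: mult_left_mono)
    qed
    also have "\<dots> = 40 * (\<Sum>j\<in>{1..n}. real (?m choose j) * s j)" by (simp add: sum_distrib_left mult_ac)
    also have "\<dots> \<le> 40 * (real ?m * N + 2 * 2^?m)" using mid_bound[where n=n and m="?m"] by simp
    finally show ?thesis .
  qed
  have "(\<Sum>j<n+3. f j) = f 0 + (\<Sum>j\<in>{1..n}. f j) + f (n+1) + f (n+2)" by (rule split_sum3)
  also have "\<dots> \<le> 40 * N + 40 * (real ?m * N + 2 * 2^?m) + (18 * N + real ?m * N + 6 * 2^?m) + 2 * real ?m * N"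
    using A B C M by linarith
  also have "\<dots> \<le> 60 * (real (n+4) * N + 2^(n+4))"
  proof -
    have e4: "n+4 = Suc ?m" by simp
    have P: "(2::real)^(n+4) = 2 * 2^?m" unfolding e4 by (rule power_Suc)
    have R: "real (n+4) * N = real ?m * N + N" by (simp add: algebra_simps)
    have "(0::real) \<le> 2^?m" by simp
    moreover have "0 \<le> real ?m * N" using N1 by simp
    ultimately show ?thesis unfolding P R mult.assoc using N1 by (smt (verit))
  qed
  finally show ?thesis unfolding f_def .
qed

lemma zle40: "3 \<le> k \<Longrightarrow> k < \<Delta> \<Longrightarrow> z k \<le> 40"
proof (induction k rule: less_induct)
  case (less k)
  show ?case
  proof (cases "k = 3")
    case True then show ?thesis using z3 by simp
  next
    case False
    have k4: "k \<ge> 4" using False less.prems(1) by simp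
    obtain n where n: "k = n + 4" using k4 by (intro that[of "k-4"]) simp
    have T: "(\<Sum>j<n+3. real ((n+3) choose j) * s j * z (n+3 - j)) \<le> 60 * (real (n+4) * N + 2^(n+4))"
      by (rule Tbound) (use less.IH less.prems n in auto)
    have zk: "z k = s (n+3) + (\<Sum>j<n+3. real ((n+3) choose j) * s j * z (n+3 - j)) / Q"
    proof -
      have "k = Suc (n+3)" using n by simp
      then show ?thesis using rec[of "n+3"] by simp
    qed
    have "real (n+4) * N \<le> Q/8" using small[of "n+4"] less.prems n by simp
    moreover have "(2::real)^(n+4) \<le> Q/2"
    proof -
      have "(2::real)^(n+4) * 2 = 2^(n+5)" by (simp add: power_Suc2[symmetric])
      also have "\<dots> \<le> 2^\<Delta>" using less.prems n by (intro power_increasing) auto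
      finally show ?thesis using D2 by simp
    qed
    ultimately have "60 * (real (n+4) * N + 2^(n+4)) \<le> 37.5 * Q" by simp
    with T have "(\<Sum>j<n+3. real ((n+3) choose j) * s j * z (n+3 - j)) / Q \<le> 37.5"
      by (subst pos_divide_le_eq[OF Qpos]) linarith
    moreover have "s (n+3) \<le> 2" using s2[of "n+3"] by simp
    ultimately show ?thesis using zk by linarith
  qed
qed

lemma final_T:
  "(\<Sum>j<\<Delta>-1. real ((\<Delta>-1) choose j) * s j * z (\<Delta>-1-j)) \<le> 60 * (real \<Delta> * N + 2^\<Delta>)"
proof -
  obtain n where n: "\<Delta> = n + 4" using D4 by (metis add.commute le_Suc_ex)
  have e: "\<Delta> - 1 = n + 3" using n by simp
  have "(\<Sum>j<\<Delta>-1. real ((\<Delta>-1) choose j) * s j * z (\<Delta>-1-j)) = (\<Sum>j<n+3. real ((n+3) choose j) * s j * z (n+3-j))"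
    unfolding e ..
  also have "\<dots> \<le> 60 * (real (n+4) * N + 2^(n+4))" by (rule Tbound) (use zle40 n in auto)
  finally show ?thesis using n by simp
qed

end


lemma divisors_finite: "(q::nat) \<ge> 1 \<Longrightarrow> finite {d. d dvd q}" by simp

lemma divisor_pos: "(q::nat) \<ge> 1 \<Longrightarrow> d dvd q \<Longrightarrow> d \<ge> 1"
  by (metis One_nat_def dvd_0_left_iff less_one not_le not_one_le_zero)

lemma divisor_le: "(q::nat) \<ge> 1 \<Longrightarrow> d dvd q \<Longrightarrow> d \<le> q"
  by (simp add: dvd_imp_le)

lemma card_div_ge1: "(q::nat) \<ge> 1 \<Longrightarrow> card {d. d dvd q} \<ge> 1"
proof -
  assume q: "q \<ge> 1"
  have "1 \<in> {d. d dvd q}" by simp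
  then have "{d. d dvd q} \<noteq> {}" by blast
  then show ?thesis using divisors_finite[OF q] by (simp add: Suc_le_eq card_gt_0_iff)
qed

lemma card_div_sq: assumes q: "(q::nat) \<ge> 1" shows "real (card {d. d dvd q})^2 \<le> 4 * real q"
proof -
  let ?D = "{d. d dvd q}"
  let ?D1 = "{d\<in>?D. d * d \<le> q}"
  let ?D2 = "{d\<in>?D. q < d * d}"
  have fD: "finite ?D" using q by simp
  have split: "card ?D = card ?D1 + card ?D2"
  proof -
    have "?D = ?D1 \<union> ?D2" by auto
    moreover have "?D1 \<inter> ?D2 = {}" by auto
    ultimately show ?thesis using fD by (metis (no_types, lifting) card_Un_disjoint finite_Un)
  qed
  have c21: "card ?D2 \<le> card ?D1"
  proof -
    have inj: "inj_on (\<lambda>d. q div d) ?D2"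
    proof (rule inj_onI)
      fix a b assume a: "a \<in> ?D2" and b: "b \<in> ?D2" and e: "q div a = q div b"
      have "a = q div (q div a)" using a q by (auto elim!: dvdE)
      moreover have "b = q div (q div b)" using b q by (auto elim!: dvdE)
      ultimately show "a = b" using e by simp
    qed
    have img: "(\<lambda>d. q div d) ` ?D2 \<subseteq> ?D1"
    proof
      fix e assume "e \<in> (\<lambda>d. q div d) ` ?D2"
      then obtain d where d: "d dvd q" "q < d * d" "e = q div d" by auto
      have qe: "q = d * e" using d by simp
      have "e \<le> d"
      proof (rule ccontr)
        assume "\<not> e \<le> d" then have "d < e" by simp
        then have "d * d \<le> d * e" by simp
        then show False using d(2) qe by simp
      qed
      then have "e * e \<le> d * e" by (simp add: mult_right_mono)
      then have "e * e \<le> q" using qe by simp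
      moreover have "e dvd q" using qe by simp
      ultimately show "e \<in> ?D1" by simp
    qed
    show ?thesis using card_inj_on_le[OF inj img] fD by simp
  qed
  obtain M where M: "M \<in> ?D1" "\<forall>x\<in>?D1. x \<le> M"
  proof -
    have "1 \<in> ?D1" using q by simp
    then have ne: "?D1 \<noteq> {}" by blast
    have fin: "finite ?D1" using fD by simp
    show ?thesis using that[of "Max ?D1"] Max_in[OF fin ne] Max_ge[OF fin] by blast
  qed
  have "?D1 \<subseteq> {1..M}" using M q divisor_pos by auto
  then have c1: "card ?D1 \<le> M" using card_mono[of "{1..M}" ?D1] by simp
  have MM: "M * M \<le> q" using M(1) by simp
  have "card ?D \<le> 2 * M" using split c21 c1 by simp
  then have "real (card ?D) \<le> 2 * real M" by simp
  then have "real (card ?D)^2 \<le> (2 * real M)^2" by (rule power_mono) simp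
  also have "\<dots> = 4 * real (M * M)" by (simp add: power2_eq_square)
  also have "\<dots> \<le> 4 * real q"
  proof -
    have "real (M * M) \<le> real q" using MM by (simp only: of_nat_le_iff)
    then show ?thesis by simp
  qed
  finally show ?thesis .
qed

definition sq :: "nat \<Rightarrow> nat \<Rightarrow> real" where
  "sq q j = (\<Sum>d\<in>{d. d dvd q}. (real d / real q) ^ j)"

lemma sq0: "q \<ge> 1 \<Longrightarrow> sq q 0 = real (card {d. d dvd q})"
  by (simp add: sq_def)

lemma sq_nonneg: "sq q j \<ge> 0" by (simp add: sq_def sum_nonneg)

lemma ratio_le1: "q \<ge> 1 \<Longrightarrow> d dvd q \<Longrightarrow> real d / real q \<le> 1"
  using divisor_le[of q d] by (simp add: divide_le_eq)

lemma sq1_le: assumes q: "q \<ge> 1" shows "sq q 1 \<le> real (card {d. d dvd q})"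
proof -
  have "sq q 1 \<le> (\<Sum>d\<in>{d. d dvd q}. 1)" unfolding sq_def
    by (rule sum_mono) (use ratio_le1[OF q] in auto)
  then show ?thesis by simp
qed

lemma sq_mono: assumes q: "q \<ge> 1" and j: "j \<ge> 2" shows "sq q j \<le> sq q 2"
  unfolding sq_def
proof (rule sum_mono)
  fix d assume "d \<in> {d. d dvd q}"
  then have "real d / real q \<le> 1" using ratio_le1[OF q] by simp
  then show "(real d / real q) ^ j \<le> (real d / real q) ^ 2"
    by (intro power_decreasing j) auto
qed

lemma inv_sq_sum: "n \<ge> 1 \<Longrightarrow> (\<Sum>e\<in>{1..n}. 1 / (real e)^2) \<le> 2 - 1 / real n"
proof (induction n rule: dec_induct)
  case base then show ?case by simp
next
  case (step n)
  have "(\<Sum>e\<in>{1..Suc n}. 1 / (real e)^2) = (\<Sum>e\<in>{1..n}. 1 / (real e)^2) + 1 / (real n + 1)^2"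
    by simp
  also have "\<dots> \<le> 2 - 1 / real n + 1 / (real n + 1)^2" using step by simp
  also have "\<dots> \<le> 2 - 1 / real (Suc n)"
  proof -
    have n1: "real n \<ge> 1" using step(1) by simp
    have "1 / (real n + 1)^2 \<le> 1 / (real n * (real n + 1))"
      using n1 by (intro divide_left_mono) (auto simp: power2_eq_square)
    also have "\<dots> = 1 / real n - 1 / real (Suc n)" using n1 by (simp add: field_simps)
    finally have t: "1 / (real n + 1)^2 \<le> 1 / real n - 1 / real (Suc n)" .
    then show ?thesis by linarith
  qed
  finally show ?case .
qed

lemma sq2_le: assumes q: "q \<ge> 1" shows "sq q 2 \<le> 2"
proof -
  let ?D = "{d. d dvd q}"
  have bij: "bij_betw (\<lambda>d. q div d) ?D ?D"
  proof (rule bij_betw_byWitness[where f'="\<lambda>d. q div d"])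
    show "\<forall>a\<in>?D. q div (q div a) = a" using q by (auto elim!: dvdE)
    show "\<forall>a\<in>?D. q div (q div a) = a" using q by (auto elim!: dvdE)
    show "(\<lambda>d. q div d) ` ?D \<subseteq> ?D"
    proof
      fix x assume "x \<in> (\<lambda>d. q div d) ` ?D"
      then obtain d where "d dvd q" "x = q div d" by auto
      then show "x \<in> ?D" by (metis dvd_mult_div_cancel dvd_triv_right mem_Collect_eq)
    qed
    then show "(\<lambda>d. q div d) ` ?D \<subseteq> ?D" .
  qed
  have "sq q 2 = (\<Sum>d\<in>?D. 1 / (real (q div d))^2)"
    unfolding sq_def
  proof (rule sum.cong[OF refl])
    fix d assume "d \<in> ?D"
    then obtain e where e: "q = d * e" by auto
    have ne: "e \<noteq> 0" "d \<noteq> 0" using e q by auto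
    have qd: "q div d = e" using e ne by simp
    have "real q = real d * real e" using e by simp
    then show "(real d / real q)^2 = 1 / (real (q div d))^2" unfolding qd using ne
      by (simp add: power2_eq_square)
  qed
  also have "\<dots> = (\<Sum>e\<in>?D. 1 / (real e)^2)"
    using sum.reindex_bij_betw[OF bij, of "\<lambda>e. 1 / (real e)^2"] by simp
  also have "\<dots> \<le> (\<Sum>e\<in>{1..q}. 1 / (real e)^2)"
  proof (rule sum_mono2)
    show "finite {1..q}" by simp
    show "?D \<subseteq> {1..q}"
    proof
      fix d assume "d \<in> ?D"
      then have "d dvd q" by simp
      then show "d \<in> {1..q}" using divisor_pos[OF q] divisor_le[OF q] by simp
    qed
    show "\<And>b. b \<in> {1..q} - ?D \<Longrightarrow> 0 \<le> 1 / (real b)^2" by simp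
  qed
  also have "\<dots> \<le> 2 - 1 / real q" by (rule inv_sq_sum[OF q])
  also have "\<dots> \<le> 2" by simp
  finally show ?thesis .
qed

lemma sq1_sq: assumes q: "q \<ge> 1" shows "(sq q 1)^2 \<le> 2 * real (card {d. d dvd q})"
proof -
  have "(sq q 1)^2 \<le> (\<Sum>d\<in>{d. d dvd q}. (real d / real q)^2) * card {d. d dvd q}"
    unfolding sq_def by (simp add: sum_squared_le_sum_of_squares)
  also have "\<dots> = sq q 2 * card {d. d dvd q}" by (simp add: sq_def)
  also have "\<dots> \<le> 2 * card {d. d dvd q}" using sq2_le[OF q] by (simp add: mult_right_mono)
  finally show ?thesis by simp
qed

lemma small_k: assumes "2^k \<le> (q::nat)" "65536 \<le> q" shows "256 * k^2 \<le> q"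
proof (cases "k \<ge> 16")
  case True
  then show ?thesis using sq256_le_pow2[OF True] assms by linarith
next
  case False
  then have "k^2 \<le> 15^2" by (intro power_mono) auto
  then show ?thesis using assms by simp
qed

lemma kN_small:
  assumes q: "65536 \<le> q" and k: "2^k \<le> (q::nat)"
  shows "real k * real (card {d. d dvd q}) \<le> real q / 8"
proof -
  let ?N = "real (card {d. d dvd q})"
  have q1: "q \<ge> 1" using q by simp
  have k2: "256 * real k ^ 2 \<le> real q"
  proof -
    have "real (256 * k^2) \<le> real q" using small_k[OF k q] by (simp only: of_nat_le_iff)
    then show ?thesis by simp
  qed
  have "(real k * ?N)^2 = real k ^ 2 * ?N^2" by (simp add: power_mult_distrib)
  also have "\<dots> \<le> real k ^ 2 * (4 * real q)" by (rule mult_left_mono[OF card_div_sq[OF q1]]) simp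
  also have "\<dots> \<le> (real q / 256) * (4 * real q)" by (rule mult_right_mono) (use k2 in auto)
  also have "\<dots> = (real q / 8)^2" by (simp add: power2_eq_square)
  finally show ?thesis by (rule power2_le_imp_le) simp
qed


fun wq :: "nat \<Rightarrow> nat \<Rightarrow> real" where
  "wq q 0 = 1"
| "wq q (Suc k) = (\<Sum>j\<le>k. real (k choose j) * (\<Sum>d\<in>{d. d dvd q}. real d ^ j) * wq q (k - j))"

definition sgm :: "nat \<Rightarrow> nat \<Rightarrow> real" where
  "sgm q j = (\<Sum>d\<in>{d. d dvd q}. real d ^ j)"

lemma sgm_sq: "q \<ge> 1 \<Longrightarrow> sgm q j = real q ^ j * sq q j"
  unfolding sgm_def sq_def sum_distrib_left by (rule sum.cong[OF refl]) (simp add: power_divide)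

lemma sgm_nonneg: "sgm q j \<ge> 0" by (simp add: sgm_def sum_nonneg)

lemma cq_nonneg: "cq q k \<ge> 0"
proof (induction k rule: less_induct)
  case (less k)
  show ?case
  proof (cases k)
    case 0 then show ?thesis by simp
  next
    case (Suc k')
    have "(\<Sum>d\<in>{d. d dvd q}. \<Sum>j\<le>k'. real ((d - 1) choose j) * cq q (k' - j)) \<ge> 0"
      using less.IH Suc by (intro sum_nonneg mult_nonneg_nonneg) auto
    then show ?thesis using Suc by simp
  qed
qed

lemma wq_nonneg: "wq q k \<ge> 0"
proof (induction k rule: less_induct)
  case (less k)
  show ?case
  proof (cases k)
    case 0 then show ?thesis by simp
  next
    case (Suc k')
    show ?thesis using less.IH Suc by (simp, intro sum_nonneg mult_nonneg_nonneg) (auto intro: sum_nonneg)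
  qed
qed

lemma choose_fact_le: "real (n choose j) * fact j \<le> real n ^ j"
proof (induction j arbitrary: n)
  case 0 then show ?case by simp
next
  case (Suc j)
  have "real (n choose Suc j) * fact (Suc j) = real (Suc j * (n choose Suc j)) * fact j"
    by (simp add: algebra_simps)
  also have "\<dots> = real n * (real ((n - 1) choose j) * fact j)"
    by (simp only: binomial_absorption) (simp add: algebra_simps)
  also have "\<dots> \<le> real n * real (n - 1) ^ j" by (rule mult_left_mono[OF Suc.IH]) simp
  also have "\<dots> \<le> real n * real n ^ j" by (intro mult_left_mono power_mono) auto
  finally show ?case by simp
qed

lemma cq_le_wq: "cq q k \<le> wq q k / fact k"
proof (induction k rule: less_induct)
  case (less k)
  show ?case
  proof (cases k)
    case 0 then show ?thesis by simp
  next
    case (Suc k')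
    let ?D = "{d. d dvd q}"
    have "(\<Sum>d\<in>?D. \<Sum>j\<le>k'. real ((d - 1) choose j) * cq q (k' - j))
        \<le> (\<Sum>d\<in>?D. \<Sum>j\<le>k'. (real d ^ j / fact j) * (wq q (k' - j) / fact (k' - j)))"
    proof (intro sum_mono mult_mono)
      fix d j assume "j \<in> {..k'}"
      have "real ((d - 1) choose j) * fact j \<le> real (d - 1) ^ j" by (rule choose_fact_le)
      also have "\<dots> \<le> real d ^ j" by (intro power_mono) auto
      finally show "real ((d - 1) choose j) \<le> real d ^ j / fact j" by (simp add: field_simps)
      show "cq q (k' - j) \<le> wq q (k' - j) / fact (k' - j)" using less.IH Suc by simp
      show "0 \<le> real d ^ j / fact j" by simp
      show "0 \<le> cq q (k' - j)" by (rule cq_nonneg)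
    qed
    also have "\<dots> = (\<Sum>j\<le>k'. \<Sum>d\<in>?D. (real d ^ j / fact j) * (wq q (k' - j) / fact (k' - j)))"
      by (rule sum.swap)
    also have "\<dots> = (\<Sum>j\<le>k'. real (k' choose j) * sgm q j * wq q (k' - j)) / fact k'"
      unfolding sum_divide_distrib
    proof (rule sum.cong[OF refl])
      fix j assume j: "j \<in> {..k'}"
      have bf: "real (k' choose j) = fact k' / (fact j * fact (k' - j))"
        using j by (simp add: binomial_fact)
      show "(\<Sum>d\<in>?D. (real d ^ j / fact j) * (wq q (k' - j) / fact (k' - j))) =
            real (k' choose j) * sgm q j * wq q (k' - j) / fact k'"
        unfolding bf sgm_def by (simp add: sum_distrib_left sum_divide_distrib field_simps)
    qed
    also have "\<dots> = wq q (Suc k') / fact k'" by (simp add: sgm_def)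
    finally have "(\<Sum>d\<in>?D. \<Sum>j\<le>k'. real ((d - 1) choose j) * cq q (k' - j)) \<le> wq q (Suc k') / fact k'" .
    then have "(\<Sum>d\<in>?D. \<Sum>j\<le>k'. real ((d - 1) choose j) * cq q (k' - j)) / real (Suc k') \<le> wq q (Suc k') / fact k' / real (Suc k')"
      by (rule divide_right_mono) simp
    then have "cq q (Suc k') \<le> wq q (Suc k') / fact k' / real (Suc k')" by (simp only: cq.simps)
    also have "\<dots> = wq q (Suc k') / fact (Suc k')" by (simp add: field_simps)
    finally show ?thesis using Suc by simp
  qed
qed

lemma cq_lower: "cq q (Suc k) \<ge> (\<Sum>d\<in>{d. d dvd q}. real ((d - 1) choose k)) / real (Suc k)"
proof -
  have "(\<Sum>d\<in>{d. d dvd q}. real ((d - 1) choose k)) \<le> (\<Sum>d\<in>{d. d dvd q}. \<Sum>j\<le>k. real ((d - 1) choose j) * cq q (k - j))"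
  proof (rule sum_mono)
    fix d
    have "real ((d - 1) choose k) = real ((d - 1) choose k) * cq q (k - k)" by simp
    also have "\<dots> \<le> (\<Sum>j\<le>k. real ((d - 1) choose j) * cq q (k - j))"
      by (rule member_le_sum[of k "{..k}" "\<lambda>j. real ((d - 1) choose j) * cq q (k - j)"]) (auto intro: mult_nonneg_nonneg cq_nonneg)
    finally show "real ((d - 1) choose k) \<le> (\<Sum>j\<le>k. real ((d - 1) choose j) * cq q (k - j))" .
  qed
  then show ?thesis by (simp add: divide_right_mono)
qed

lemma gap:
  assumes d1: "d \<ge> 1"
  shows "real (fact m * ((d - 1) choose m)) \<le> real d ^ m \<and>
         real d ^ m - real (fact m * ((d - 1) choose m)) \<le> real m * (real m + 1) / 2 * real d ^ m / real d"
proof (induction m)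
  case 0 then show ?case by simp
next
  case (Suc m)
  define P where "P = real (fact m * ((d - 1) choose m))"
  have P0: "P \<ge> 0" by (simp add: P_def)
  have rec: "real (fact (Suc m) * ((d - 1) choose Suc m)) = P * real (d - 1 - m)"
  proof -
    have e1: "fact (Suc m) * ((d - 1) choose Suc m) = (fact m::nat) * (Suc m * ((d - 1) choose Suc m))"
      by (metis fact_Suc mult.assoc mult.commute of_nat_id)
    have e2: "Suc m * ((d - 1) choose Suc m) = (d - 1 - m) * ((d - 1) choose m)"
      by (metis binomial_absorption binomial_absorb_comp)
    have "fact (Suc m) * ((d - 1) choose Suc m) = (fact m * ((d - 1) choose m)) * (d - 1 - m)"
      using e1 e2 by (simp only: mult_ac)
    then show ?thesis unfolding P_def by (simp only: of_nat_mult)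
  qed
  have dd: "real (d - 1 - m) \<le> real d" by simp
  have dd2: "real d - (real m + 1) \<le> real (d - 1 - m)" using d1 by (simp add: of_nat_diff)
  have IH1: "P \<le> real d ^ m" and IH2: "real d ^ m - P \<le> real m * (real m + 1) / 2 * real d ^ m / real d"
    using Suc by (simp_all add: P_def)
  have dpos: "real d > 0" using d1 by simp
  have A: "P * real (d - 1 - m) \<le> real d ^ Suc m"
  proof -
    have "P * real (d - 1 - m) \<le> real d ^ m * real d" by (intro mult_mono IH1 dd) (use P0 in auto)
    then show ?thesis by (simp add: algebra_simps)
  qed
  have B: "real d ^ Suc m - P * real (d - 1 - m) \<le> real (Suc m) * (real (Suc m) + 1) / 2 * real d ^ Suc m / real d"
  proof -
    have "P * (real d - (real m + 1)) \<le> P * real (d - 1 - m)" by (rule mult_left_mono[OF dd2 P0])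
    then have "real d ^ Suc m - P * real (d - 1 - m) \<le> real d * (real d ^ m - P) + (real m + 1) * P"
      by (simp add: algebra_simps)
    also have "\<dots> \<le> real d * (real m * (real m + 1) / 2 * real d ^ m / real d) + (real m + 1) * real d ^ m"
      by (intro add_mono mult_left_mono IH2 IH1) auto
    also have "\<dots> = real (Suc m) * (real (Suc m) + 1) / 2 * real d ^ Suc m / real d"
      using dpos by (simp add: field_simps)
    finally show ?thesis .
  qed
  show ?case using A B rec by simp
qed


lemma Bavg_eq:
  assumes q1: "q \<ge> 1" and n: "\<Delta> * q \<le> n"
  shows "Bavg n q \<Delta> = cq q \<Delta>"
proof -
  have "(\<Sum>\<pi>\<in>{p. p permutes {1..n}}. real (c1 n (\<pi> ^^ q) choose \<Delta>)) = real (Bs q {1..n} \<Delta>)"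
    unfolding Bs_def of_nat_sum by (rule sum.cong[OF refl]) (simp add: c1_def Fq_def)
  also have "\<dots> = fact n * cq q \<Delta>" using Bs_closed[OF q1, of "{1..n}" \<Delta>] n by simp
  finally show ?thesis unfolding Bavg_def by simp
qed

lemma sigma_nat: assumes q1: "q \<ge> 1" shows "sigma (real j) q = sgm q j"
  unfolding sigma_def sgm_def
proof (rule sum.cong[OF refl])
  fix d assume "d \<in> {d. d dvd q}"
  then have "d \<ge> 1" using divisor_pos[OF q1] by simp
  then show "real d powr real j = real d ^ j" by (simp add: powr_realpow)
qed

lemma sgm0: "q \<ge> 1 \<Longrightarrow> sgm q 0 = real (card {d. d dvd q})" by (simp add: sgm_def)

lemma z_rec:
  assumes q1: "q \<ge> 1"
  defines "z \<equiv> \<lambda>k. wq q k / real q ^ (k - 1)"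
  shows "z (Suc k) = sq q k + (\<Sum>j<k. real (k choose j) * sq q j * z (k - j)) / real q"
proof -
  have qp: "real q > 0" using q1 by simp
  have "z (Suc k) = wq q (Suc k) / real q ^ k" by (simp add: z_def)
  also have "wq q (Suc k) = (\<Sum>j\<le>k. real (k choose j) * sgm q j * wq q (k - j))" by (simp add: sgm_def)
  also have "\<dots> = (\<Sum>j<k. real (k choose j) * sgm q j * wq q (k - j)) + sgm q k"
    by (simp add: lessThan_Suc_atMost[symmetric])
  finally have "z (Suc k) = (\<Sum>j<k. real (k choose j) * sgm q j * wq q (k - j)) / real q ^ k + sgm q k / real q ^ k"
    by (simp add: add_divide_distrib)
  also have "sgm q k / real q ^ k = sq q k" using sgm_sq[OF q1, of k] qp by simp
  also have "(\<Sum>j<k. real (k choose j) * sgm q j * wq q (k - j)) / real q ^ k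
      = (\<Sum>j<k. real (k choose j) * sq q j * z (k - j)) / real q"
    unfolding sum_divide_distrib
  proof (rule sum.cong[OF refl])
    fix j assume "j \<in> {..<k}"
    then have jk: "j < k" by simp
    have pk: "real q ^ k = real q ^ j * real q ^ (k - j - 1) * real q"
    proof -
      have "k = Suc (j + (k - j - 1))" using jk by simp
      then have "real q ^ k = real q ^ Suc (j + (k - j - 1))" by simp
      also have "\<dots> = real q ^ j * real q ^ (k - j - 1) * real q" by (simp add: power_add algebra_simps)
      finally show ?thesis .
    qed
    have "k - j - 1 = k - j - 1" ..
    show "real (k choose j) * sgm q j * wq q (k - j) / real q ^ k = real (k choose j) * sq q j * z (k - j) / real q"
      unfolding sgm_sq[OF q1] z_def pk using qp by (simp add: field_simps diff_diff_left)
  qed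
  finally show ?thesis by simp
qed

lemma big_case:
  assumes q: "65536 \<le> q" and D2: "2^\<Delta> \<le> q" and D4: "\<Delta> \<ge> 4"
  shows "\<bar>cq q \<Delta> - sgm q (\<Delta> - 1) / fact \<Delta>\<bar>
          \<le> 60 * (1 / fact \<Delta>) * real q ^ (\<Delta> - 2) * (real \<Delta> * real (card {d. d dvd q}) + 2 ^ \<Delta>)"
proof -
  let ?N = "real (card {d. d dvd q})"
  let ?D = "{d. d dvd q}"
  define z where "z = (\<lambda>k. wq q k / real q ^ (k - 1))"
  have q1: "q \<ge> 1" using q by simp
  have qp: "real q > 0" using q1 by simp
  interpret zrec "sq q" z ?N "real q" \<Delta>
  proof
    show "?N \<ge> 1" using card_div_ge1[OF q1] by simp
    show "sq q 0 = ?N" by (rule sq0[OF q1])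
    show "?N^2 \<le> 4 * real q" by (rule card_div_sq[OF q1])
    show "0 \<le> sq q 1" by (rule sq_nonneg)
    show "sq q 1 \<le> ?N" by (rule sq1_le[OF q1])
    show "(sq q 1)^2 \<le> 2 * ?N" by (rule sq1_sq[OF q1])
    show "\<And>j. j \<ge> 2 \<Longrightarrow> 0 \<le> sq q j \<and> sq q j \<le> 2"
      using sq_nonneg sq_mono[OF q1] sq2_le[OF q1] by (meson order.trans)
    show "\<And>k. z (Suc k) = sq q k + (\<Sum>j<k. real (k choose j) * sq q j * z (k - j)) / real q"
      unfolding z_def by (rule z_rec[OF q1, unfolded Let_def])
    show "real q > 0" by (rule qp)
    show "\<And>k. k \<le> \<Delta> \<Longrightarrow> real k * ?N \<le> real q / 8"
    proof -
      fix k assume "k \<le> \<Delta>"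
      then have "(2::nat)^k \<le> 2^\<Delta>" by (intro power_increasing) auto
      then have "2^k \<le> q" using D2 by linarith
      then show "real k * ?N \<le> real q / 8" by (rule kN_small[OF q])
    qed
    show "2^\<Delta> \<le> real q"
    proof -
      have "real (2^\<Delta>) \<le> real q" using D2 by (simp only: of_nat_le_iff)
      then show ?thesis by simp
    qed
    show "\<Delta> \<ge> 4" by (rule D4)
  qed
  define T where "T = (\<Sum>j<\<Delta>-1. real ((\<Delta>-1) choose j) * sq q j * z (\<Delta>-1-j))"
  have TB: "T \<le> 60 * (real \<Delta> * ?N + 2^\<Delta>)" unfolding T_def by (rule final_T)
  have zD: "z \<Delta> = sq q (\<Delta> - 1) + T / real q"
  proof -
    have "\<Delta> = Suc (\<Delta> - 1)" using D4 by simp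
    then have "z \<Delta> = z (Suc (\<Delta> - 1))" by simp
    also have "\<dots> = sq q (\<Delta> - 1) + T / real q" unfolding T_def by (rule rec)
    finally show ?thesis .
  qed
  have pw: "real q ^ (\<Delta> - 1) = real q ^ (\<Delta> - 2) * real q"
  proof -
    have "\<Delta> - 1 = Suc (\<Delta> - 2)" using D4 by simp
    then show ?thesis by (simp add: algebra_simps)
  qed
  have wD: "wq q \<Delta> = sgm q (\<Delta> - 1) + real q ^ (\<Delta> - 2) * T"
  proof -
    have "wq q \<Delta> = real q ^ (\<Delta> - 1) * z \<Delta>" using qp by (simp add: z_def)
    also have "\<dots> = real q ^ (\<Delta> - 1) * sq q (\<Delta> - 1) + real q ^ (\<Delta> - 2) * T"
      unfolding zD pw using qp by (simp add: field_simps)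
    also have "real q ^ (\<Delta> - 1) * sq q (\<Delta> - 1) = sgm q (\<Delta> - 1)" by (rule sgm_sq[OF q1, symmetric])
    finally show ?thesis .
  qed
  define F where "F = (fact \<Delta> :: real)"
  have Fp: "F > 0" by (simp add: F_def)
  define X where "X = 60 * real q ^ (\<Delta> - 2) * (real \<Delta> * ?N + 2 ^ \<Delta>)"
  have upper: "cq q \<Delta> * F - sgm q (\<Delta> - 1) \<le> X"
  proof -
    have "cq q \<Delta> * F \<le> wq q \<Delta>" using cq_le_wq[of q \<Delta>] Fp by (simp add: F_def field_simps)
    moreover have "real q ^ (\<Delta> - 2) * T \<le> X"
    proof -
      have "real q ^ (\<Delta> - 2) * T \<le> real q ^ (\<Delta> - 2) * (60 * (real \<Delta> * ?N + 2^\<Delta>))"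
        by (rule mult_left_mono[OF TB]) simp
      then show ?thesis unfolding X_def by (simp only: mult_ac)
    qed
    ultimately show ?thesis using wD by linarith
  qed
  have lower: "sgm q (\<Delta> - 1) - cq q \<Delta> * F \<le> X"
  proof -
    let ?m = "\<Delta> - 1"
    have Dm: "\<Delta> = Suc ?m" using D4 by simp
    have F2: "F = real \<Delta> * fact ?m"
    proof -
      have "F = fact (Suc ?m)" unfolding F_def using Dm by metis
      also have "\<dots> = real (Suc ?m) * fact ?m" by (rule fact_Suc)
      finally show ?thesis using Dm by metis
    qed
    have c1: "cq q \<Delta> \<ge> (\<Sum>d\<in>?D. real ((d - 1) choose ?m)) / real \<Delta>"
    proof -
      have "cq q (Suc ?m) \<ge> (\<Sum>d\<in>?D. real ((d - 1) choose ?m)) / real (Suc ?m)" by (rule cq_lower)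
      then show ?thesis using Dm by metis
    qed
    have c2: "cq q \<Delta> * F \<ge> (\<Sum>d\<in>?D. real (fact ?m * ((d - 1) choose ?m)))"
    proof -
      have "cq q \<Delta> * F \<ge> (\<Sum>d\<in>?D. real ((d - 1) choose ?m)) / real \<Delta> * F"
        by (rule mult_right_mono[OF c1]) (use Fp in simp)
      also have "(\<Sum>d\<in>?D. real ((d - 1) choose ?m)) / real \<Delta> * F = (\<Sum>d\<in>?D. real (fact ?m * ((d - 1) choose ?m)))"
        unfolding F2 using D4 by (simp add: sum_distrib_left sum_distrib_right field_simps)
      finally show ?thesis .
    qed
    have gp: "sgm q ?m - (\<Sum>d\<in>?D. real (fact ?m * ((d - 1) choose ?m))) \<le> real ?m * (real ?m + 1) / 2 * sgm q (\<Delta> - 2)"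
    proof -
      have "sgm q ?m - (\<Sum>d\<in>?D. real (fact ?m * ((d - 1) choose ?m))) = (\<Sum>d\<in>?D. real d ^ ?m - real (fact ?m * ((d - 1) choose ?m)))"
        by (simp add: sgm_def sum_subtractf)
      also have "\<dots> \<le> (\<Sum>d\<in>?D. real ?m * (real ?m + 1) / 2 * real d ^ (\<Delta> - 2))"
      proof (rule sum_mono)
        fix d assume "d \<in> ?D"
        then have d1: "d \<ge> 1" using divisor_pos[OF q1] by simp
        have e: "real d ^ ?m / real d = real d ^ (\<Delta> - 2)"
        proof -
          have "?m = Suc (\<Delta> - 2)" using D4 by simp
          then show ?thesis using d1 by simp
        qed
        have "real d ^ ?m - real (fact ?m * ((d - 1) choose ?m)) \<le> real ?m * (real ?m + 1) / 2 * real d ^ ?m / real d"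
          using conjunct2[OF gap[OF d1, of ?m]] .
        also have "\<dots> = real ?m * (real ?m + 1) / 2 * real d ^ (\<Delta> - 2)" using e by (metis times_divide_eq_right)
        finally show "real d ^ ?m - real (fact ?m * ((d - 1) choose ?m)) \<le> real ?m * (real ?m + 1) / 2 * real d ^ (\<Delta> - 2)" .
      qed
      also have "\<dots> = real ?m * (real ?m + 1) / 2 * sgm q (\<Delta> - 2)" by (simp add: sgm_def sum_distrib_left)
      finally show ?thesis .
    qed
    have s2b: "sgm q (\<Delta> - 2) \<le> 2 * real q ^ (\<Delta> - 2)"
    proof -
      have "sq q (\<Delta> - 2) \<le> 2" using sq_mono[OF q1, of "\<Delta> - 2"] sq2_le[OF q1] D4 by linarith
      then show ?thesis unfolding sgm_sq[OF q1] by (simp add: mult.commute mult_right_mono)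
    qed
    have Dsq: "real ?m * (real ?m + 1) \<le> 2 ^ \<Delta>"
    proof -
      have "real ?m * (real ?m + 1) = real (\<Delta> - 1) * real \<Delta>" using D4 by simp
      also have "\<dots> \<le> real \<Delta> * real \<Delta>" by (intro mult_right_mono) auto
      also have "\<dots> = real (\<Delta>^2)" by (simp add: power2_eq_square)
      also have "\<dots> \<le> real (2^\<Delta>)" using sq_le_pow2[OF D4] by (simp only: of_nat_le_iff)
      finally show ?thesis by simp
    qed
    have "real ?m * (real ?m + 1) / 2 * sgm q (\<Delta> - 2) \<le> real ?m * (real ?m + 1) / 2 * (2 * real q ^ (\<Delta> - 2))"
      by (rule mult_left_mono[OF s2b]) simp
    also have "\<dots> = real ?m * (real ?m + 1) * real q ^ (\<Delta> - 2)" by simp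
    also have "\<dots> \<le> 2 ^ \<Delta> * real q ^ (\<Delta> - 2)" by (rule mult_right_mono[OF Dsq]) simp
    also have "\<dots> \<le> X"
    proof -
      have "0 \<le> real \<Delta> * ?N" by simp
      then have "2 ^ \<Delta> \<le> 60 * (real \<Delta> * ?N + 2 ^ \<Delta>)" by simp
      then have "2 ^ \<Delta> * real q ^ (\<Delta> - 2) \<le> 60 * (real \<Delta> * ?N + 2 ^ \<Delta>) * real q ^ (\<Delta> - 2)"
        by (rule mult_right_mono) simp
      then show ?thesis unfolding X_def by (simp only: mult_ac)
    qed
    finally show ?thesis using gp c2 by linarith
  qed
  have "\<bar>cq q \<Delta> * F - sgm q (\<Delta> - 1)\<bar> \<le> X" using upper lower by linarith
  then have "\<bar>cq q \<Delta> * F - sgm q (\<Delta> - 1)\<bar> / F \<le> X / F" using Fp by (simp add: divide_right_mono)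
  moreover have "\<bar>cq q \<Delta> * F - sgm q (\<Delta> - 1)\<bar> / F = \<bar>cq q \<Delta> - sgm q (\<Delta> - 1) / F\<bar>"
    using Fp by (simp add: field_simps)
  ultimately show ?thesis unfolding X_def F_def by (simp add: field_simps)
qed


lemma two_choose2: "2 * (n choose 2) = n * (n - 1)"
proof (induction n)
  case 0 then show ?case by simp
next
  case (Suc n)
  have "Suc n choose 2 = n + (n choose 2)" by (simp add: numeral_2_eq_2)
  then show ?case using Suc by (cases n) (auto simp: algebra_simps)
qed

lemma cq1: "q \<ge> 1 \<Longrightarrow> cq q 1 = real (card {d. d dvd q})"
  by (simp add: One_nat_def)

lemma sgm1_ge: assumes q1: "q \<ge> 1" shows "sgm q 1 \<ge> real q" "sgm q 1 \<ge> real (card {d. d dvd q})"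
proof -
  have "real q = real q ^ 1" by simp
  also have "\<dots> \<le> sgm q 1" unfolding sgm_def
    by (rule member_le_sum[of q "{d. d dvd q}" "\<lambda>d. real d ^ 1"]) (use q1 in auto)
  finally show "sgm q 1 \<ge> real q" .
  have "real (card {d. d dvd q}) = (\<Sum>d\<in>{d. d dvd q}. 1)" by simp
  also have "\<dots> \<le> sgm q 1" unfolding sgm_def by (rule sum_mono) (use divisor_pos[OF q1] in auto)
  finally show "sgm q 1 \<ge> real (card {d. d dvd q})" .
qed

lemma cq2: assumes q1: "q \<ge> 1"
  shows "cq q 2 = (real (card {d. d dvd q})^2 + sgm q 1 - real (card {d. d dvd q})) / 2"
proof -
  let ?N = "real (card {d. d dvd q})"
  have "cq q 2 = (\<Sum>d\<in>{d. d dvd q}. \<Sum>j\<le>1. real ((d - 1) choose j) * cq q (1 - j)) / 2"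
    by (simp add: numeral_2_eq_2)
  also have "(\<Sum>d\<in>{d. d dvd q}. \<Sum>j\<le>1. real ((d - 1) choose j) * cq q (1 - j)) = (\<Sum>d\<in>{d. d dvd q}. ?N + (real d - 1))"
  proof (rule sum.cong[OF refl])
    fix d assume "d \<in> {d. d dvd q}"
    then have "d \<ge> 1" using divisor_pos[OF q1] by simp
    then show "(\<Sum>j\<le>1. real ((d - 1) choose j) * cq q (1 - j)) = ?N + (real d - 1)"
      using cq1[OF q1] by (simp add: atMost_Suc of_nat_diff)
  qed
  also have "\<dots> = ?N^2 + sgm q 1 - ?N" by (simp add: sum.distrib sum_subtractf sgm_def power2_eq_square)
  finally show ?thesis .
qed

lemma cq3: assumes q1: "q \<ge> 1"
  shows "cq q 3 = (real (card {d. d dvd q}) * cq q 2 + (sgm q 1 - real (card {d. d dvd q})) * real (card {d. d dvd q})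
                 + (sgm q 2 - 3 * sgm q 1 + 2 * real (card {d. d dvd q})) / 2) / 3"
proof -
  let ?N = "real (card {d. d dvd q})"
  have "cq q 3 = (\<Sum>d\<in>{d. d dvd q}. \<Sum>j\<le>2. real ((d - 1) choose j) * cq q (2 - j)) / 3"
    by (simp add: numeral_3_eq_3 numeral_2_eq_2)
  also have "(\<Sum>d\<in>{d. d dvd q}. \<Sum>j\<le>2. real ((d - 1) choose j) * cq q (2 - j))
      = (\<Sum>d\<in>{d. d dvd q}. cq q 2 + (real d - 1) * ?N + (real d ^ 2 - 3 * real d + 2) / 2)"
  proof (rule sum.cong[OF refl])
    fix d assume "d \<in> {d. d dvd q}"
    then have d1: "d \<ge> 1" using divisor_pos[OF q1] by simp
    have c2: "real ((d - 1) choose 2) = (real d ^ 2 - 3 * real d + 2) / 2"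
    proof -
      have "real (2 * ((d - 1) choose 2)) = real ((d - 1) * (d - 1 - 1))" by (simp only: two_choose2)
      then have "2 * real ((d - 1) choose 2) = (real d - 1) * (real d - 2)"
        using d1 by (cases "d = 1") (auto simp: of_nat_diff)
      then show ?thesis by (simp add: algebra_simps power2_eq_square)
    qed
    have s: "(\<Sum>j\<le>2. real ((d - 1) choose j) * cq q (2 - j)) =
        real ((d - 1) choose 0) * cq q 2 + real ((d - 1) choose 1) * cq q 1 + real ((d - 1) choose 2) * cq q 0"
      by (simp add: numeral_2_eq_2 atMost_Suc)
    show "(\<Sum>j\<le>2. real ((d - 1) choose j) * cq q (2 - j)) = cq q 2 + (real d - 1) * ?N + (real d ^ 2 - 3 * real d + 2) / 2"
      unfolding s c2 using d1 cq1[OF q1] by (simp add: of_nat_diff)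
  qed
  also have "\<dots> = (\<Sum>d\<in>{d. d dvd q}. (cq q 2 - ?N + 1) + (?N - 3/2) * real d + 1/2 * real d ^ 2)"
    by (rule sum.cong[OF refl]) (simp add: field_simps)
  also have "\<dots> = ?N * (cq q 2 - ?N + 1) + (?N - 3/2) * sgm q 1 + 1/2 * sgm q 2"
    by (simp add: sum.distrib sum_distrib_left sgm_def)
  also have "\<dots> = ?N * cq q 2 + (sgm q 1 - ?N) * ?N + (sgm q 2 - 3 * sgm q 1 + 2 * ?N) / 2"
    by (simp add: field_simps)
  finally show ?thesis .
qed

lemma aux_lin: "(1::real) \<le> x \<Longrightarrow> x \<le> y \<Longrightarrow> (y - x) / 2 \<le> 60 * y" by (simp add: field_simps)

lemma case2: assumes q1: "q \<ge> 1"
  shows "\<bar>cq q 2 - sgm q 1 / 2\<bar> \<le> 60 * real (card {d. d dvd q})^2"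
proof -
  let ?N = "real (card {d. d dvd q})"
  have N1: "?N \<ge> 1" using card_div_ge1[OF q1] by simp
  have a: "?N \<le> ?N^2" using N1 by (simp add: power2_eq_square)
  have e: "cq q 2 - sgm q 1 / 2 = (?N^2 - ?N) / 2" unfolding cq2[OF q1] by (simp add: field_simps)
  have "0 \<le> (?N^2 - ?N) / 2" using a by simp
  moreover have "(?N^2 - ?N) / 2 \<le> 60 * ?N^2" using aux_lin[OF N1 a] .
  ultimately show ?thesis unfolding e by simp
qed

lemma case3: assumes q1: "q \<ge> 1"
  shows "\<bar>cq q 3 - sgm q 2 / 6\<bar> \<le> 60 * real (card {d. d dvd q}) * sgm q 1"
proof -
  let ?N = "real (card {d. d dvd q})"
  let ?s = "sgm q 1"
  have N1: "?N \<ge> 1" using card_div_ge1[OF q1] by simp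
  have Ns: "?N \<le> ?s" and qs: "real q \<le> ?s" using sgm1_ge[OF q1] by auto
  have NN: "?N^2 \<le> 4 * real q" by (rule card_div_sq[OF q1])
  have e: "cq q 3 - sgm q 2 / 6 = ?N^3 / 6 + ?N * ?s / 2 - ?N^2 / 2 - ?s / 2 + ?N / 3"
    unfolding cq3[OF q1] cq2[OF q1] by (simp add: field_simps power2_eq_square power3_eq_cube)
  have a: "?N^3 \<le> 4 * (?N * ?s)"
  proof -
    have "?N^3 = ?N * ?N^2" by (simp add: power3_eq_cube power2_eq_square)
    also have "\<dots> \<le> ?N * (4 * ?s)" using NN qs N1 by (intro mult_left_mono) auto
    finally show ?thesis by simp
  qed
  have b: "?N^2 \<le> ?N * ?s" using Ns N1 by (simp add: power2_eq_square mult_left_mono)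
  have c: "?s \<le> ?N * ?s" using N1 Ns by (simp add: mult_right_mono[of 1 ?N ?s, simplified])
  have d: "?N \<le> ?N * ?s" using N1 Ns by (simp add: mult_left_mono[of 1 ?s ?N, simplified])
  have p: "0 \<le> ?N^2" "0 \<le> ?N^3" using N1 by auto
  show ?thesis unfolding e abs_le_iff mult.assoc using a b c d p N1 Ns by (intro conjI) linarith+
qed


theorem proposition5p3:
  "\<exists>(q0::nat) (C::real). C > 0 \<and>
    (\<forall>(q::nat) (\<Delta>::nat) (n::nat).
       q \<ge> q0 \<and> q \<ge> 1 \<and> \<Delta> \<ge> 1 \<and> real \<Delta> \<le> ln (real q) / ln 2 \<and> n \<ge> \<Delta> * q \<longrightarrow>
       (\<Delta> = 1 \<longrightarrow> Bavg n q \<Delta> = sigma 0 q) \<and>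
       (\<Delta> = 2 \<longrightarrow> \<bar>Bavg n q \<Delta> - sigma 1 q / 2\<bar> \<le> C * (sigma 0 q)^2) \<and>
       (\<Delta> = 3 \<longrightarrow> \<bar>Bavg n q \<Delta> - sigma 2 q / 6\<bar> \<le> C * sigma 0 q * sigma 1 q) \<and>
       (\<Delta> \<ge> 4 \<longrightarrow> \<bar>Bavg n q \<Delta> - sigma (real \<Delta> - 1) q / fact \<Delta>\<bar>
            \<le> C * (1 / fact \<Delta>) * real q ^ (\<Delta> - 2) * (real \<Delta> * sigma 0 q + 2 ^ \<Delta>)))"
proof (intro exI[of _ "65536::nat"] exI[of _ "60::real"] conjI allI impI)
  show "(60::real) > 0" by simp
next
  fix q \<Delta> n :: nat
  assume asm: "q \<ge> 65536 \<and> q \<ge> 1 \<and> \<Delta> \<ge> 1 \<and> real \<Delta> \<le> ln (real q) / ln 2 \<and> n \<ge> \<Delta> * q"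
  have q: "q \<ge> 65536" and q1: "q \<ge> 1" and D1: "\<Delta> \<ge> 1" and lnq: "real \<Delta> \<le> ln (real q) / ln 2"
    and nq: "\<Delta> * q \<le> n" using asm by auto
  have B: "Bavg n q \<Delta> = cq q \<Delta>" by (rule Bavg_eq[OF q1 nq])
  have D2: "2^\<Delta> \<le> q"
  proof -
    have l2: "ln (2::real) > 0" by simp
    have "real \<Delta> * ln 2 \<le> ln (real q)" using lnq l2 by (simp add: pos_le_divide_eq)
    then have "ln ((2::real)^\<Delta>) \<le> ln (real q)" by (simp add: ln_realpow)
    then have "(2::real)^\<Delta> \<le> real q" using q1 by (subst (asm) ln_le_cancel_iff) auto
    then have "real (2^\<Delta>) \<le> real q" by simp
    then show ?thesis by (simp only: of_nat_le_iff)
  qed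
  have s0: "sigma 0 q = real (card {d. d dvd q})"
    using sigma_nat[OF q1, of 0] sgm0[OF q1] by simp
  have s1: "sigma 1 q = sgm q 1" using sigma_nat[OF q1, of 1] by simp
  have s2: "sigma 2 q = sgm q 2" using sigma_nat[OF q1, of 2] by simp
  have sD: "sigma (real \<Delta> - 1) q = sgm q (\<Delta> - 1)"
    using sigma_nat[OF q1, of "\<Delta> - 1"] D1 by (simp add: of_nat_diff)
  show "Bavg n q \<Delta> = sigma 0 q" if e: "\<Delta> = 1"
  proof -
    have "Bavg n q \<Delta> = cq q 1" using B e by simp
    then show "Bavg n q \<Delta> = sigma 0 q" using cq1[OF q1] s0 by simp
  qed
  show "\<bar>Bavg n q \<Delta> - sigma 1 q / 2\<bar> \<le> 60 * (sigma 0 q)^2" if e: "\<Delta> = 2"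
    using B s0 s1 case2[OF q1] e by simp
  show "\<bar>Bavg n q \<Delta> - sigma 2 q / 6\<bar> \<le> 60 * sigma 0 q * sigma 1 q" if e: "\<Delta> = 3"
    using B s0 s1 s2 case3[OF q1] e by simp
  show "\<bar>Bavg n q \<Delta> - sigma (real \<Delta> - 1) q / fact \<Delta>\<bar>
            \<le> 60 * (1 / fact \<Delta>) * real q ^ (\<Delta> - 2) * (real \<Delta> * sigma 0 q + 2 ^ \<Delta>)" if e: "\<Delta> \<ge> 4"
    using B s0 sD big_case[OF q D2 e] by simp
qed

end
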